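(* Let $z_1(t),\dots,z_4(t)$ solve the system of Theorem 5.2 and let $u(t)>0$ satisfy $\dot u=2\big(|z_1|^2+|z_2|^2+|z_3|^2+|z_4|^2\big)u$. Then each of the quantities $$|z_1|^2-|z_2|^2+|z_3|^2-|z_4|^2,\quad z_1\bar z_2+z_3\bar z_4,\quad \mathrm{Re}(z_1z_4-z_2z_3),\quad z_1\bar z_3+z_2\bar z_4$$ is a constant multiple of $u$; the quantity $Q(z_1,z_2,z_3,z_4)$ is a constant multiple of $u^2$; and $\mathrm{Im}(z_1z_4-z_2z_3)$ satisfies $\frac{d}{dt}\mathrm{Im}(z_1z_4-z_2z_3)=-2\big(\sum_j|z_j|^2\big)\mathrm{Im}(z_1z_4-z_2z_3)$, hence is a constant multiple of $u^{-1}$.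
   Context: The system of Theorem 5.2 is: $\dot z_1=z_1(|z_1|^2+|z_2|^2+|z_3|^2-|z_4|^2)+2(\overline{z_1z_4-z_2z_3}+z_2z_3)\bar z_4$, $\dot z_2=z_2(|z_4|^2+|z_1|^2+|z_2|^2-|z_3|^2)-2(\overline{z_1z_4-z_2z_3}-z_1z_4)\bar z_3$, $\dot z_3=z_3(|z_3|^2+|z_4|^2+|z_1|^2-|z_2|^2)-2(\overline{z_1z_4-z_2z_3}-z_1z_4)\bar z_2$, $\dot z_4=z_4(|z_2|^2+|z_3|^2+|z_4|^2-|z_1|^2)+2(\overline{z_1z_4-z_2z_3}+z_2z_3)\bar z_1$. Define $Q(z_1,z_2,z_3,z_4)=(|z_1|^2-|z_2|^2+|z_3|^2-|z_4|^2)^2+4|z_1\bar z_2+z_3\bar z_4|^2=(|z_1|^2+|z_2|^2)^2+(|z_3|^2+|z_4|^2)^2+2|z_1\bar z_3+z_2\bar z_4|^2-2|z_1z_4-z_2z_3|^2$. *)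

theory Defs
  imports "HOL-Analysis.Analysis"
begin

abbreviation sqn :: "complex \<Rightarrow> real" where "sqn z \<equiv> (cmod z)\<^sup>2"

text \<open>Right-hand sides of the system of Theorem 5.2.\<close>
definition F1 :: "complex \<Rightarrow> complex \<Rightarrow> complex \<Rightarrow> complex \<Rightarrow> complex" where
  "F1 z1 z2 z3 z4 = z1 * complex_of_real (sqn z1 + sqn z2 + sqn z3 - sqn z4)
     + 2 * (cnj (z1*z4 - z2*z3) + z2*z3) * cnj z4"

definition F2 :: "complex \<Rightarrow> complex \<Rightarrow> complex \<Rightarrow> complex \<Rightarrow> complex" where
  "F2 z1 z2 z3 z4 = z2 * complex_of_real (sqn z4 + sqn z1 + sqn z2 - sqn z3)
     - 2 * (cnj (z1*z4 - z2*z3) - z1*z4) * cnj z3"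

definition F3 :: "complex \<Rightarrow> complex \<Rightarrow> complex \<Rightarrow> complex \<Rightarrow> complex" where
  "F3 z1 z2 z3 z4 = z3 * complex_of_real (sqn z3 + sqn z4 + sqn z1 - sqn z2)
     - 2 * (cnj (z1*z4 - z2*z3) - z1*z4) * cnj z2"

definition F4 :: "complex \<Rightarrow> complex \<Rightarrow> complex \<Rightarrow> complex \<Rightarrow> complex" where
  "F4 z1 z2 z3 z4 = z4 * complex_of_real (sqn z2 + sqn z3 + sqn z4 - sqn z1)
     + 2 * (cnj (z1*z4 - z2*z3) + z2*z3) * cnj z1"

text \<open>The quantity Q (first of the two given equal expressions).\<close>
definition Q :: "complex \<Rightarrow> complex \<Rightarrow> complex \<Rightarrow> complex \<Rightarrow> real" where
  "Q z1 z2 z3 z4 = (sqn z1 - sqn z2 + sqn z3 - sqn z4)\<^sup>2 + 4 * sqn (z1 * cnj z2 + z3 * cnj z4)"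

end

theory Submission
  imports Defs
begin

lemma idA: "(z1 * cnj (F2 z1 z2 z3 z4) + F1 z1 z2 z3 z4 * cnj z2) + (z3 * cnj (F4 z1 z2 z3 z4) + F3 z1 z2 z3 z4 * cnj z4)
  = of_real (2 * (sqn z1 + sqn z2 + sqn z3 + sqn z4)) * (z1 * cnj z2 + z3 * cnj z4)"
  unfolding F1_def F2_def F3_def F4_def cmod_power2 by (simp add: complex_eq_iff) algebra

lemma idB: "(z1 * cnj (F3 z1 z2 z3 z4) + F1 z1 z2 z3 z4 * cnj z3) + (z2 * cnj (F4 z1 z2 z3 z4) + F2 z1 z2 z3 z4 * cnj z4)
  = of_real (2 * (sqn z1 + sqn z2 + sqn z3 + sqn z4)) * (z1 * cnj z3 + z2 * cnj z4)"
  unfolding F1_def F2_def F3_def F4_def cmod_power2 by (simp add: complex_eq_iff) algebra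

lemma idD: "(z1 * F4 z1 z2 z3 z4 + F1 z1 z2 z3 z4 * z4) - (z2 * F3 z1 z2 z3 z4 + F2 z1 z2 z3 z4 * z3)
  = of_real (2 * (sqn z1 + sqn z2 + sqn z3 + sqn z4)) * cnj (z1 * z4 - z2 * z3)"
  unfolding F1_def F2_def F3_def F4_def cmod_power2 by (simp add: complex_eq_iff) algebra

lemma idN: "(z1 * cnj (F1 z1 z2 z3 z4) + F1 z1 z2 z3 z4 * cnj z1) - (z2 * cnj (F2 z1 z2 z3 z4) + F2 z1 z2 z3 z4 * cnj z2)
   + (z3 * cnj (F3 z1 z2 z3 z4) + F3 z1 z2 z3 z4 * cnj z3) - (z4 * cnj (F4 z1 z2 z3 z4) + F4 z1 z2 z3 z4 * cnj z4)
  = of_real (2 * (sqn z1 + sqn z2 + sqn z3 + sqn z4)) * (z1 * cnj z1 - z2 * cnj z2 + z3 * cnj z3 - z4 * cnj z4)"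
  unfolding F1_def F2_def F3_def F4_def cmod_power2 by (simp add: complex_eq_iff) algebra

lemma constC:
  fixes P :: "real \<Rightarrow> complex" and u k :: "real \<Rightarrow> real"
  assumes "convex T"
    and dP: "\<And>t. t \<in> T \<Longrightarrow> (P has_vector_derivative of_real (k t) * P t) (at t)"
    and du: "\<And>t. t \<in> T \<Longrightarrow> (u has_real_derivative k t * u t) (at t)"
    and up: "\<And>t. t \<in> T \<Longrightarrow> u t > 0"
  shows "\<exists>c. \<forall>t\<in>T. P t = c * of_real (u t)"
proof -
  have Z: "\<And>t. t \<in> T \<Longrightarrow> ((\<lambda>s. inverse (u s) *\<^sub>R P s) has_vector_derivative 0) (at t within T)"
  proof -
    fix t assume t: "t \<in> T"
    have u0: "u t \<noteq> 0" using up[OF t] by simp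
    have ui0: "((\<lambda>s. inverse (u s)) has_real_derivative - (k t * u t * inverse (u t ^ Suc (Suc 0)))) (at t)"
      using DERIV_inverse_fun[OF du[OF t] u0] .
    have e1: "- (k t * u t * inverse (u t ^ Suc (Suc 0))) = - k t * inverse (u t)"
      using u0 by (simp add: field_simps)
    have ui: "((\<lambda>s. inverse (u s)) has_real_derivative - k t * inverse (u t)) (at t)"
      using ui0 unfolding e1 .
    have R: "((\<lambda>s. inverse (u s) *\<^sub>R P s) has_vector_derivative
        (inverse (u t) *\<^sub>R (of_real (k t) * P t) + (- k t * inverse (u t)) *\<^sub>R P t)) (at t)"
      by (rule has_vector_derivative_scaleR[OF ui dP[OF t]])
    have e2: "inverse (u t) *\<^sub>R (of_real (k t) * P t) + (- k t * inverse (u t)) *\<^sub>R P t = 0"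
      by (simp add: scaleR_conv_of_real algebra_simps)
    show "((\<lambda>s. inverse (u s) *\<^sub>R P s) has_vector_derivative 0) (at t within T)"
      using has_vector_derivative_at_within[OF R] unfolding e2 .
  qed
  then obtain c where c: "\<And>t. t \<in> T \<Longrightarrow> inverse (u t) *\<^sub>R P t = c"
    using has_vector_derivative_zero_constant[OF assms(1) Z] by blast
  show ?thesis
  proof (intro exI ballI)
    fix t assume t: "t \<in> T"
    have u0: "u t \<noteq> 0" using up[OF t] by simp
    have "P t = (of_real (u t) * of_real (inverse (u t))) * P t" using u0
      by (simp flip: of_real_mult)
    also have "\<dots> = of_real (u t) * (inverse (u t) *\<^sub>R P t)"
      by (simp add: scaleR_conv_of_real mult.assoc)
    also have "\<dots> = c * of_real (u t)" using c[OF t] by (simp add: mult.commute)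
    finally show "P t = c * of_real (u t)" .
  qed
qed

lemma constR:
  fixes f u k :: "real \<Rightarrow> real"
  assumes "convex T"
    and dP: "\<And>t. t \<in> T \<Longrightarrow> (f has_real_derivative k t * f t) (at t)"
    and du: "\<And>t. t \<in> T \<Longrightarrow> (u has_real_derivative k t * u t) (at t)"
    and up: "\<And>t. t \<in> T \<Longrightarrow> u t > 0"
  shows "\<exists>c. \<forall>t\<in>T. f t = c * u t"
proof -
  have "\<exists>c. \<forall>t\<in>T. complex_of_real (f t) = c * of_real (u t)"
  proof (rule constC[OF assms(1) _ du up])
    fix t assume "t \<in> T"
    from has_vector_derivative_of_real[OF dP[OF this]]
    show "((\<lambda>t. complex_of_real (f t)) has_vector_derivative of_real (k t) * of_real (f t)) (at t)"
      by simp
  qed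
  then obtain c where c: "\<forall>t\<in>T. complex_of_real (f t) = c * of_real (u t)" by blast
  show ?thesis
  proof (intro exI ballI)
    fix t assume "t \<in> T"
    with c have "Re (complex_of_real (f t)) = Re (c * of_real (u t))" by simp
    then show "f t = Re c * u t" by simp
  qed
qed

lemma constInv:
  fixes f u k :: "real \<Rightarrow> real"
  assumes "convex T"
    and dP: "\<And>t. t \<in> T \<Longrightarrow> (f has_real_derivative - k t * f t) (at t)"
    and du: "\<And>t. t \<in> T \<Longrightarrow> (u has_real_derivative k t * u t) (at t)"
    and up: "\<And>t. t \<in> T \<Longrightarrow> u t > 0"
  shows "\<exists>c. \<forall>t\<in>T. f t = c / u t"
proof -
  have "\<exists>c. \<forall>t\<in>T. u t * f t = c"
  proof (rule has_field_derivative_zero_constant[OF assms(1)])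
    fix t assume t: "t \<in> T"
    have "((\<lambda>s. u s * f s) has_real_derivative k t * u t * f t + (- k t * f t) * u t) (at t)"
      by (rule DERIV_mult[OF du[OF t] dP[OF t]])
    moreover have "k t * u t * f t + (- k t * f t) * u t = 0" by (simp add: algebra_simps)
    ultimately have "((\<lambda>s. u s * f s) has_real_derivative 0) (at t)" by simp
    then show "((\<lambda>s. u s * f s) has_real_derivative 0) (at t within T)"
      by (rule has_field_derivative_at_within)
  qed
  then obtain c where c: "\<forall>t\<in>T. u t * f t = c" by blast
  show ?thesis
  proof (intro exI ballI)
    fix t assume t: "t \<in> T"
    from c t up[OF t] show "f t = c / u t" by (auto simp: field_simps)
  qed
qed

theorem mainTheorem9:
  fixes T :: "real set" and z1 z2 z3 z4 :: "real \<Rightarrow> complex" and u :: "real \<Rightarrow> real"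
  assumes T: "open T" "is_interval T"
    and d1: "\<And>t. t \<in> T \<Longrightarrow> (z1 has_vector_derivative F1 (z1 t) (z2 t) (z3 t) (z4 t)) (at t)"
    and d2: "\<And>t. t \<in> T \<Longrightarrow> (z2 has_vector_derivative F2 (z1 t) (z2 t) (z3 t) (z4 t)) (at t)"
    and d3: "\<And>t. t \<in> T \<Longrightarrow> (z3 has_vector_derivative F3 (z1 t) (z2 t) (z3 t) (z4 t)) (at t)"
    and d4: "\<And>t. t \<in> T \<Longrightarrow> (z4 has_vector_derivative F4 (z1 t) (z2 t) (z3 t) (z4 t)) (at t)"
    and upos: "\<And>t. t \<in> T \<Longrightarrow> u t > 0"
    and du: "\<And>t. t \<in> T \<Longrightarrow>
       (u has_real_derivative 2 * (sqn (z1 t) + sqn (z2 t) + sqn (z3 t) + sqn (z4 t)) * u t) (at t)"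
  shows "(\<exists>c::real. \<forall>t\<in>T. sqn (z1 t) - sqn (z2 t) + sqn (z3 t) - sqn (z4 t) = c * u t)
       \<and> (\<exists>c::complex. \<forall>t\<in>T. z1 t * cnj (z2 t) + z3 t * cnj (z4 t) = c * complex_of_real (u t))
       \<and> (\<exists>c::real. \<forall>t\<in>T. Re (z1 t * z4 t - z2 t * z3 t) = c * u t)
       \<and> (\<exists>c::complex. \<forall>t\<in>T. z1 t * cnj (z3 t) + z2 t * cnj (z4 t) = c * complex_of_real (u t))
       \<and> (\<exists>c::real. \<forall>t\<in>T. Q (z1 t) (z2 t) (z3 t) (z4 t) = c * (u t)\<^sup>2)
       \<and> (\<forall>t\<in>T. ((\<lambda>s. Im (z1 s * z4 s - z2 s * z3 s)) has_real_derivative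
              - 2 * (sqn (z1 t) + sqn (z2 t) + sqn (z3 t) + sqn (z4 t)) * Im (z1 t * z4 t - z2 t * z3 t)) (at t))
       \<and> (\<exists>c::real. \<forall>t\<in>T. Im (z1 t * z4 t - z2 t * z3 t) = c / u t)"
proof -
  have cT: "convex T" using T(2) is_interval_convex_1 by blast
  define k where "k t = 2 * (sqn (z1 t) + sqn (z2 t) + sqn (z3 t) + sqn (z4 t))" for t
  have duk: "\<And>t. t \<in> T \<Longrightarrow> (u has_real_derivative k t * u t) (at t)"
    using du by (simp add: k_def)
  have hA: "((\<lambda>s. z1 s * cnj (z2 s) + z3 s * cnj (z4 s)) has_vector_derivative
      of_real (k t) * (z1 t * cnj (z2 t) + z3 t * cnj (z4 t))) (at t)" if t: "t \<in> T" for t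
    using has_vector_derivative_add[OF has_vector_derivative_mult[OF d1[OF t] has_vector_derivative_cnj[OF d2[OF t]]]
        has_vector_derivative_mult[OF d3[OF t] has_vector_derivative_cnj[OF d4[OF t]]]]
    by (simp only: idA k_def)
  have hB: "((\<lambda>s. z1 s * cnj (z3 s) + z2 s * cnj (z4 s)) has_vector_derivative
      of_real (k t) * (z1 t * cnj (z3 t) + z2 t * cnj (z4 t))) (at t)" if t: "t \<in> T" for t
    using has_vector_derivative_add[OF has_vector_derivative_mult[OF d1[OF t] has_vector_derivative_cnj[OF d3[OF t]]]
        has_vector_derivative_mult[OF d2[OF t] has_vector_derivative_cnj[OF d4[OF t]]]]
    by (simp only: idB k_def)
  have hD: "((\<lambda>s. z1 s * z4 s - z2 s * z3 s) has_vector_derivative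
      of_real (k t) * cnj (z1 t * z4 t - z2 t * z3 t)) (at t)" if t: "t \<in> T" for t
    using has_vector_derivative_diff[OF has_vector_derivative_mult[OF d1[OF t] d4[OF t]]
        has_vector_derivative_mult[OF d2[OF t] d3[OF t]]]
    by (simp only: idD k_def)
  have hN: "((\<lambda>s. z1 s * cnj (z1 s) - z2 s * cnj (z2 s) + z3 s * cnj (z3 s) - z4 s * cnj (z4 s)) has_vector_derivative
      of_real (k t) * (z1 t * cnj (z1 t) - z2 t * cnj (z2 t) + z3 t * cnj (z3 t) - z4 t * cnj (z4 t))) (at t)"
    if t: "t \<in> T" for t
    using has_vector_derivative_diff[OF has_vector_derivative_add[OF has_vector_derivative_diff[OF
        has_vector_derivative_mult[OF d1[OF t] has_vector_derivative_cnj[OF d1[OF t]]]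
        has_vector_derivative_mult[OF d2[OF t] has_vector_derivative_cnj[OF d2[OF t]]]]
        has_vector_derivative_mult[OF d3[OF t] has_vector_derivative_cnj[OF d3[OF t]]]]
        has_vector_derivative_mult[OF d4[OF t] has_vector_derivative_cnj[OF d4[OF t]]]]
    by (simp only: idN k_def)
  obtain cA where cA: "\<forall>t\<in>T. z1 t * cnj (z2 t) + z3 t * cnj (z4 t) = cA * complex_of_real (u t)"
    using constC[OF cT hA duk upos] by blast
  obtain cB where cB: "\<forall>t\<in>T. z1 t * cnj (z3 t) + z2 t * cnj (z4 t) = cB * complex_of_real (u t)"
    using constC[OF cT hB duk upos] by blast
  obtain cN where cN: "\<forall>t\<in>T. z1 t * cnj (z1 t) - z2 t * cnj (z2 t) + z3 t * cnj (z3 t) - z4 t * cnj (z4 t)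
      = cN * complex_of_real (u t)"
    using constC[OF cT hN duk upos] by blast
  have N: "\<forall>t\<in>T. sqn (z1 t) - sqn (z2 t) + sqn (z3 t) - sqn (z4 t) = Re cN * u t"
  proof
    fix t assume t: "t \<in> T"
    have "Re (z1 t * cnj (z1 t) - z2 t * cnj (z2 t) + z3 t * cnj (z3 t) - z4 t * cnj (z4 t))
      = Re (cN * complex_of_real (u t))" using cN t by simp
    then show "sqn (z1 t) - sqn (z2 t) + sqn (z3 t) - sqn (z4 t) = Re cN * u t"
      by (simp add: complex_mult_cnj cmod_power2 del: complex_In_mult_cnj_zero)
  qed
  have dRe: "((\<lambda>s. Re (z1 s * z4 s - z2 s * z3 s)) has_real_derivative
      k t * Re (z1 t * z4 t - z2 t * z3 t)) (at t)" if t: "t \<in> T" for t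
  proof -
    have e: "Re (complex_of_real (k t) * cnj (z1 t * z4 t - z2 t * z3 t)) = k t * Re (z1 t * z4 t - z2 t * z3 t)"
      by simp
    from conjunct1[OF hD[OF t, unfolded has_vector_derivative_complex_iff]] show ?thesis
      by (simp only: e)
  qed
  have dIm: "((\<lambda>s. Im (z1 s * z4 s - z2 s * z3 s)) has_real_derivative
      - k t * Im (z1 t * z4 t - z2 t * z3 t)) (at t)" if t: "t \<in> T" for t
  proof -
    have e: "Im (complex_of_real (k t) * cnj (z1 t * z4 t - z2 t * z3 t)) = - k t * Im (z1 t * z4 t - z2 t * z3 t)"
      by (simp add: algebra_simps)
    from conjunct2[OF hD[OF t, unfolded has_vector_derivative_complex_iff]] show ?thesis
      by (simp only: e)
  qed
  obtain cR where cR: "\<forall>t\<in>T. Re (z1 t * z4 t - z2 t * z3 t) = cR * u t"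
    using constR[OF cT dRe duk upos] by blast
  obtain cI where cI: "\<forall>t\<in>T. Im (z1 t * z4 t - z2 t * z3 t) = cI / u t"
    using constInv[OF cT dIm duk upos] by blast
  have Qc: "\<forall>t\<in>T. Q (z1 t) (z2 t) (z3 t) (z4 t) = ((Re cN)\<^sup>2 + 4 * (cmod cA)\<^sup>2) * (u t)\<^sup>2"
  proof
    fix t assume t: "t \<in> T"
    have "sqn (z1 t * cnj (z2 t) + z3 t * cnj (z4 t)) = (cmod cA)\<^sup>2 * (u t)\<^sup>2"
      using cA t upos[OF t] by (simp add: norm_mult power_mult_distrib)
    then show "Q (z1 t) (z2 t) (z3 t) (z4 t) = ((Re cN)\<^sup>2 + 4 * (cmod cA)\<^sup>2) * (u t)\<^sup>2"
      unfolding Q_def using N t by (simp add: algebra_simps power_mult_distrib)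
  qed
  have dIm': "\<forall>t\<in>T. ((\<lambda>s. Im (z1 s * z4 s - z2 s * z3 s)) has_real_derivative
              - 2 * (sqn (z1 t) + sqn (z2 t) + sqn (z3 t) + sqn (z4 t)) * Im (z1 t * z4 t - z2 t * z3 t)) (at t)"
    using dIm unfolding k_def by simp
  show ?thesis
    apply (intro conjI)
    apply (rule exI, rule N)
    apply (rule exI, rule cA)
    apply (rule exI, rule cR)
    apply (rule exI, rule cB)
    apply (rule exI, rule Qc)
    apply (rule dIm')
    apply (rule exI, rule cI)
    done
qed

end
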